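(* Let $f: D\to\{0,1\}$, $D\subseteq\{0,1\}^n$, be a non-constant $n$-bit partial Boolean function. Then $f$ can be computed exactly by a quantum 1-query algorithm if and only if there exists a vector $\vec\beta=(\beta_0,\beta_1,\dots,\beta_n)^T$ with all $\beta_i\ge 0$, $\beta_0+\beta_1+\cdots+\beta_n=1$, and $$\beta_0+\sum_{i=1}^n \beta_i(-1)^{x_i\oplus y_i}=0$$ for all $x\in\{x\in D: f(x)=0\}$ and all $y\in\{y\in D: f(y)=1\}$ (i.e. $(|F(x\oplus y)\rangle_1)^T\vec\beta=0$).
   Context: An $n$-bit partial Boolean function is a map $f:D\to\{0,1\}$ with $D\subseteq\{0,1\}^n$. For $z\in\{0,1\}^n$, $|F(z)\rangle_1=(1,(-1)^{z_1},\dots,(-1)^{z_n})^T\in\mathbb{R}^{n+1}$. A quantum 1-query algorithm works in a finite-dimensional Hilbert space with orthonormal basis $\{|i,j'\rangle\}$, where $i\in\{0,1,\dots,n\}$ and $j'$ ranges over a finite set; for input $x\in\{0,1\}^n$ the oracle is the unitary $O_x|i,j'\rangle=(-1)^{x_i}|i,j'\rangle$ for $i\in\{1,\dots,n\}$ and $O_x|0,j'\rangle=|0,j'\rangle$. The algorithm consists of an initial state $|\psi_0\rangle$, input-independent unitaries $U_0,U_1$, and a projective measurement with outcomes in $\{0,1\}$ applied to $U_1O_xU_0|\psi_0\rangle$. It computes $f$ exactly if for every $x\in D$ the outcome equals $f(x)$ with probability $1$. *)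

theory Defs
  imports Complex_Main
begin

(* Bit strings in {0,1}^n are boolean lists of length n; True encodes 1.
  Bit x_i (1-based) is  x ! (i - 1).
  The Hilbert space has orthonormal basis |i,j> with i in {0..n}, j in {0..<m}
  (m \<ge> 1 arbitrary: any finite set of work indices). States are
  functions on index pairs, only values on the basis index set matter. *)

type_synonym idx = "nat \<times> nat"
type_synonym qstate = "idx \<Rightarrow> complex"
type_synonym qop = "idx \<Rightarrow> idx \<Rightarrow> complex"

definition basis_idx :: "nat \<Rightarrow> nat \<Rightarrow> idx set" where
  "basis_idx n m = {0..n} \<times> {0..<m}"

definition apply_op :: "nat \<Rightarrow> nat \<Rightarrow> qop \<Rightarrow> qstate \<Rightarrow> qstate" where
  "apply_op n m U v = (\<lambda>a. \<Sum>b\<in>basis_idx n m. U a b * v b)"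

definition is_unitary :: "nat \<Rightarrow> nat \<Rightarrow> qop \<Rightarrow> bool" where
  "is_unitary n m U \<longleftrightarrow>
     (\<forall>a\<in>basis_idx n m. \<forall>b\<in>basis_idx n m.
        (\<Sum>c\<in>basis_idx n m. cnj (U c a) * U c b) = (if a = b then 1 else 0))"

definition is_projection :: "nat \<Rightarrow> nat \<Rightarrow> qop \<Rightarrow> bool" where
  "is_projection n m P \<longleftrightarrow>
     (\<forall>a\<in>basis_idx n m. \<forall>b\<in>basis_idx n m. P a b = cnj (P b a)) \<and>
     (\<forall>a\<in>basis_idx n m. \<forall>b\<in>basis_idx n m.
        (\<Sum>c\<in>basis_idx n m. P a c * P c b) = P a b)"

definition sq_norm :: "nat \<Rightarrow> nat \<Rightarrow> qstate \<Rightarrow> real" where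
  "sq_norm n m v = (\<Sum>a\<in>basis_idx n m. (cmod (v a)) ^ 2)"

definition id_op :: qop where
  "id_op = (\<lambda>a b. if a = b then 1 else 0)"

definition meas_proj :: "qop \<Rightarrow> bool \<Rightarrow> qop" where
  "meas_proj P b = (if b then P else (\<lambda>a c. id_op a c - P a c))"

definition outcome_prob :: "nat \<Rightarrow> nat \<Rightarrow> qop \<Rightarrow> qstate \<Rightarrow> bool \<Rightarrow> real" where
  "outcome_prob n m P v b = sq_norm n m (apply_op n m (meas_proj P b) v)"

definition query_op :: "bool list \<Rightarrow> qstate \<Rightarrow> qstate" where
  "query_op x v = (\<lambda>(i, j). (if 1 \<le> i \<and> x ! (i - 1) then -1 else 1) * v (i, j))"

definition final_state :: "nat \<Rightarrow> nat \<Rightarrow> qstate \<Rightarrow> qop \<Rightarrow> qop \<Rightarrow> bool list \<Rightarrow> qstate" where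
  "final_state n m \<psi>0 U0 U1 x = apply_op n m U1 (query_op x (apply_op n m U0 \<psi>0))"

definition exact_1query :: "nat \<Rightarrow> bool list set \<Rightarrow> (bool list \<Rightarrow> bool) \<Rightarrow> bool" where
  "exact_1query n D f \<longleftrightarrow>
     (\<exists>m::nat. \<exists>\<psi>0 U0 U1 P. m \<ge> 1 \<and> sq_norm n m \<psi>0 = 1 \<and>
        is_unitary n m U0 \<and> is_unitary n m U1 \<and> is_projection n m P \<and>
        (\<forall>x\<in>D. outcome_prob n m P (final_state n m \<psi>0 U0 U1 x) (f x) = 1))"

definition xor_sign :: "bool list \<Rightarrow> bool list \<Rightarrow> nat \<Rightarrow> real" where
  "xor_sign x y i = (if x ! (i - 1) \<noteq> y ! (i - 1) then -1 else 1)"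

end

theory Submission
  imports Defs
begin


definition rmv :: "'a set \<Rightarrow> ('a\<Rightarrow>'a\<Rightarrow>real) \<Rightarrow> ('a\<Rightarrow>real) \<Rightarrow> 'a \<Rightarrow> real" where
  "rmv I Q v = (\<lambda>a. \<Sum>b\<in>I. Q a b * v b)"
definition rip :: "'a set \<Rightarrow> ('a\<Rightarrow>real) \<Rightarrow> ('a\<Rightarrow>real) \<Rightarrow> real" where
  "rip I u v = (\<Sum>a\<in>I. u a * v a)"

lemma rip_sym_op:
  assumes "\<forall>a\<in>I. \<forall>b\<in>I. Q a b = Q b a"
  shows "rip I (rmv I Q u) w = rip I u (rmv I Q w)"
proof -
  have "rip I (rmv I Q u) w = (\<Sum>a\<in>I. \<Sum>b\<in>I. Q a b * u b * w a)"
    by (simp add: rip_def rmv_def sum_distrib_right)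
  also have "\<dots> = (\<Sum>b\<in>I. \<Sum>a\<in>I. Q a b * u b * w a)" by (rule sum.swap)
  also have "\<dots> = (\<Sum>b\<in>I. u b * (\<Sum>a\<in>I. Q b a * w a))"
    by (auto simp: sum_distrib_left assms mult_ac intro!: sum.cong)
  finally show ?thesis by (simp add: rip_def rmv_def)
qed

lemma rmv_idem:
  assumes "\<forall>a\<in>I. \<forall>b\<in>I. (\<Sum>c\<in>I. Q a c * Q c b) = Q a b" and "a \<in> I"
  shows "rmv I Q (rmv I Q v) a = rmv I Q v a"
proof -
  have "rmv I Q (rmv I Q v) a = (\<Sum>b\<in>I. \<Sum>c\<in>I. Q a b * Q b c * v c)"
    by (simp add: rmv_def sum_distrib_left mult_ac)
  also have "\<dots> = (\<Sum>c\<in>I. \<Sum>b\<in>I. Q a b * Q b c * v c)" by (rule sum.swap)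
  also have "\<dots> = (\<Sum>c\<in>I. (\<Sum>b\<in>I. Q a b * Q b c) * v c)"
    by (simp add: sum_distrib_right)
  also have "\<dots> = (\<Sum>c\<in>I. Q a c * v c)"
    using assms by (auto intro!: sum.cong)
  finally show ?thesis by (simp add: rmv_def)
qed

lemma rmv_cong: "(\<forall>b\<in>I. v b = v' b) \<Longrightarrow> rmv I Q v = rmv I Q v'"
  by (auto simp: rmv_def intro!: ext sum.cong)
lemma rip_cong: "(\<forall>b\<in>I. v b = v' b) \<Longrightarrow> (\<forall>b\<in>I. u b = u' b) \<Longrightarrow> rip I u v = rip I u' v'"
  by (auto simp: rip_def intro!: sum.cong)

lemma rmv_diff: "rmv I Q (\<lambda>a. u a - v a) a = rmv I Q u a - rmv I Q v a"
  by (simp add: rmv_def right_diff_distrib sum_subtractf)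
lemma rip_diff_left: "rip I (\<lambda>a. u a - v a) w = rip I u w - rip I v w"
  by (simp add: rip_def left_diff_distrib sum_subtractf)

lemma proj_exists:
  assumes "finite I"
  shows "\<exists>Q. (\<forall>a\<in>I. \<forall>b\<in>I. Q a b = Q b a) \<and>
    (\<forall>a\<in>I. \<forall>b\<in>I. (\<Sum>c\<in>I. Q a c * Q c b) = Q a b) \<and>
    (\<forall>v\<in>set vs. \<forall>a\<in>I. rmv I Q v a = v a) \<and>
    (\<forall>w. (\<forall>v\<in>set vs. rip I v w = 0) \<longrightarrow> (\<forall>a\<in>I. rmv I Q w a = 0))"
proof (induction vs)
  case Nil
  show ?case by (rule exI[of _ "\<lambda>a b. 0"]) (simp add: rmv_def)
next
  case (Cons v vs)
  then obtain Q where sym: "\<forall>a\<in>I. \<forall>b\<in>I. Q a b = Q b a"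
    and idem: "\<forall>a\<in>I. \<forall>b\<in>I. (\<Sum>c\<in>I. Q a c * Q c b) = Q a b"
    and fix1: "\<forall>u\<in>set vs. \<forall>a\<in>I. rmv I Q u a = u a"
    and orth: "\<forall>w. (\<forall>u\<in>set vs. rip I u w = 0) \<longrightarrow> (\<forall>a\<in>I. rmv I Q w a = 0)"
    by blast
  define r where "r = (\<lambda>a. v a - rmv I Q v a)"
  define N where "N = rip I r r"
  have Qr: "rmv I Q r a = 0" if "a \<in> I" for a
    using rmv_idem[OF idem that, of v] by (simp add: r_def rmv_diff)
  have rip_r: "rip I r w = rip I v w - rip I v (rmv I Q w)" for w
    unfolding r_def rip_diff_left rip_sym_op[OF sym] by simp
  show ?case
  proof (cases "N = 0")
    case True
    have "r a = 0" if "a \<in> I" for a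
    proof -
      have "(\<Sum>a\<in>I. r a * r a) = 0" using True by (simp add: N_def rip_def)
      then have "\<forall>a\<in>I. r a * r a = 0"
        using assms by (subst (asm) sum_nonneg_eq_0_iff) auto
      then show ?thesis using that by simp
    qed
    then have fv: "\<forall>a\<in>I. rmv I Q v a = v a" by (simp add: r_def)
    show ?thesis
      by (rule exI[of _ Q]) (use sym idem fix1 orth fv in auto)
  next
    case False
    define Q' where "Q' = (\<lambda>a b. Q a b + r a * r b / N)"
    have Q'v: "rmv I Q' u a = rmv I Q u a + r a * rip I r u / N" for u a
    proof -
      have "rmv I Q' u a = (\<Sum>b\<in>I. Q a b * u b + (r a / N) * (r b * u b))"
        by (simp add: Q'_def rmv_def algebra_simps)
      also have "\<dots> = rmv I Q u a + (r a / N) * rip I r u"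
        by (simp add: sum.distrib sum_distrib_left rmv_def rip_def)
      finally show ?thesis by simp
    qed
    have sym': "\<forall>a\<in>I. \<forall>b\<in>I. Q' a b = Q' b a" using sym by (simp add: Q'_def mult_ac)
    have idem': "\<forall>a\<in>I. \<forall>b\<in>I. (\<Sum>c\<in>I. Q' a c * Q' c b) = Q' a b"
    proof (intro ballI)
      fix a b assume a: "a \<in> I" and b: "b \<in> I"
      have e: "Q' a c * Q' c b = Q a c * Q c b + (r b / N) * (Q a c * r c) + (r a / N) * (Q b c * r c)
          + (r a * r b / N^2) * (r c * r c)" if "c \<in> I" for c
        using sym that a b False by (simp add: Q'_def field_simps power2_eq_square)
      have s1: "(\<Sum>c\<in>I. Q a c * r c) = 0" using Qr[OF a] by (simp add: rmv_def)
      have s2: "(\<Sum>c\<in>I. Q b c * r c) = 0" using Qr[OF b] by (simp add: rmv_def)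
      have "(\<Sum>c\<in>I. Q' a c * Q' c b) = (\<Sum>c\<in>I. Q a c * Q c b) + (r b / N) * (\<Sum>c\<in>I. Q a c * r c)
          + (r a / N) * (\<Sum>c\<in>I. Q b c * r c) + (r a * r b / N^2) * (\<Sum>c\<in>I. r c * r c)"
        by (simp add: sum.cong[OF refl e] sum.distrib sum_distrib_left)
      also have "\<dots> = Q a b + r a * r b / N"
        using idem a b s1 s2 False by (simp add: N_def rip_def power2_eq_square)
      finally show "(\<Sum>c\<in>I. Q' a c * Q' c b) = Q' a b" by (simp add: Q'_def)
    qed
    have rQv: "rip I r (rmv I Q v) = 0"
    proof -
      have "rip I r (rmv I Q v) = rip I (rmv I Q r) v" by (simp add: rip_sym_op[OF sym])
      also have "\<dots> = 0" using Qr by (simp add: rip_def)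
      finally show ?thesis .
    qed
    have rv: "rip I r v = N"
    proof -
      have "rip I r v = rip I r (\<lambda>a. r a + rmv I Q v a)" by (simp add: r_def)
      also have "\<dots> = N + rip I r (rmv I Q v)" by (simp add: rip_def N_def distrib_left sum.distrib)
      finally show ?thesis using rQv by simp
    qed
    have fixv: "\<forall>a\<in>I. rmv I Q' v a = v a"
      using False by (simp add: Q'v rv) (simp add: r_def)
    have fixu: "\<forall>u\<in>set vs. \<forall>a\<in>I. rmv I Q' u a = u a"
    proof (intro ballI)
      fix u a assume u: "u \<in> set vs" and a: "a \<in> I"
      have "rip I v (rmv I Q u) = rip I v u" using fix1 u by (intro rip_cong) auto
      then have "rip I r u = 0" by (simp add: rip_r)
      then show "rmv I Q' u a = u a" using fix1 u a by (simp add: Q'v)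
    qed
    have orth': "\<forall>w. (\<forall>u\<in>set (v#vs). rip I u w = 0) \<longrightarrow> (\<forall>a\<in>I. rmv I Q' w a = 0)"
    proof (intro allI impI ballI)
      fix w a assume h: "\<forall>u\<in>set (v#vs). rip I u w = 0" and a: "a \<in> I"
      have Qw: "\<forall>a\<in>I. rmv I Q w a = 0" using orth h by simp
      have "rip I v (rmv I Q w) = rip I v (\<lambda>_. 0)" using Qw by (intro rip_cong) auto
      then have "rip I v (rmv I Q w) = 0" by (simp add: rip_def)
      then have "rip I r w = 0" using h by (simp add: rip_r)
      then show "rmv I Q' w a = 0" using Qw a by (simp add: Q'v)
    qed
    show ?thesis
      by (rule exI[of _ Q']) (use sym' idem' fixv fixu orth' in auto)
  qed
qed





definition cip :: "nat \<Rightarrow> nat \<Rightarrow> qstate \<Rightarrow> qstate \<Rightarrow> complex" where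
  "cip n m u v = (\<Sum>a\<in>basis_idx n m. cnj (u a) * v a)"

lemma fin_B[simp]: "finite (basis_idx n m)"
  by (simp add: basis_idx_def)

lemma bsum2: "(\<Sum>c\<in>basis_idx n m. g c) = (\<Sum>i\<le>n. \<Sum>j<m. g (i,j))"
  by (simp add: basis_idx_def sum.cartesian_product' atLeast0AtMost atLeast0LessThan)

lemma bsum1: "(\<Sum>c\<in>basis_idx n 1. g c) = (\<Sum>i\<le>n. g (i,0))"
  by (simp add: bsum2)

lemma sq_norm_cip: "complex_of_real (sq_norm n m v) = cip n m v v"
  unfolding sq_norm_def cip_def of_real_sum
  by (intro sum.cong refl) (metis complex_norm_square mult.commute)

lemma cip_cong: "(\<forall>b\<in>basis_idx n m. u b = u' b) \<Longrightarrow> (\<forall>b\<in>basis_idx n m. v b = v' b)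
   \<Longrightarrow> cip n m u v = cip n m u' v'"
  by (auto simp: cip_def intro!: sum.cong)

lemma sq_norm_cong: "(\<forall>b\<in>basis_idx n m. u b = u' b) \<Longrightarrow> sq_norm n m u = sq_norm n m u'"
  by (auto simp: sq_norm_def intro!: sum.cong)

lemma apply_op_cong: "(\<forall>b\<in>basis_idx n m. v b = v' b) \<Longrightarrow> apply_op n m U v = apply_op n m U v'"
  by (auto simp: apply_op_def intro!: ext sum.cong)

lemma apply_id: "a \<in> basis_idx n m \<Longrightarrow> apply_op n m id_op v a = v a"
proof -
  assume "a \<in> basis_idx n m"
  have "apply_op n m id_op v a = (\<Sum>b\<in>basis_idx n m. if a = b then v b else 0)"
    unfolding apply_op_def id_op_def by (intro sum.cong refl) auto
  also have "\<dots> = v a" using \<open>a \<in> basis_idx n m\<close> by (simp add: sum.delta)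
  finally show ?thesis .
qed

lemma cip_herm:
  assumes "\<forall>a\<in>basis_idx n m. \<forall>b\<in>basis_idx n m. H a b = cnj (H b a)"
  shows "cip n m (apply_op n m H u) v = cip n m u (apply_op n m H v)"
proof -
  let ?B = "basis_idx n m"
  have "cip n m (apply_op n m H u) v = (\<Sum>a\<in>?B. \<Sum>b\<in>?B. cnj (H a b) * cnj (u b) * v a)"
    by (simp add: cip_def apply_op_def sum_distrib_right)
  also have "\<dots> = (\<Sum>b\<in>?B. \<Sum>a\<in>?B. cnj (H a b) * cnj (u b) * v a)" by (rule sum.swap)
  also have "\<dots> = (\<Sum>b\<in>?B. cnj (u b) * (\<Sum>a\<in>?B. H b a * v a))"
  proof -
    have h: "cnj (H a b) = H b a" if "a \<in> ?B" "b \<in> ?B" for a b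
      using assms that by (metis complex_cnj_cnj)
    show ?thesis by (auto simp: sum_distrib_left mult_ac h intro!: sum.cong)
  qed
  finally show ?thesis by (simp add: cip_def apply_op_def)
qed

lemma cip_unit:
  assumes "is_unitary n m U"
  shows "cip n m (apply_op n m U u) (apply_op n m U v) = cip n m u v"
proof -
  let ?B = "basis_idx n m"
  have "cip n m (apply_op n m U u) (apply_op n m U v)
      = (\<Sum>c\<in>?B. \<Sum>b\<in>?B. \<Sum>d\<in>?B. cnj (U c b) * U c d * (cnj (u b) * v d))"
    by (simp add: cip_def apply_op_def sum_distrib_right sum_distrib_left mult_ac)
  also have "\<dots> = (\<Sum>b\<in>?B. \<Sum>c\<in>?B. \<Sum>d\<in>?B. cnj (U c b) * U c d * (cnj (u b) * v d))"
    by (rule sum.swap)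
  also have "\<dots> = (\<Sum>b\<in>?B. \<Sum>d\<in>?B. \<Sum>c\<in>?B. cnj (U c b) * U c d * (cnj (u b) * v d))"
    by (rule sum.cong[OF refl], rule sum.swap)
  also have "\<dots> = (\<Sum>b\<in>?B. \<Sum>d\<in>?B. (\<Sum>c\<in>?B. cnj (U c b) * U c d) * (cnj (u b) * v d))"
    by (simp add: sum_distrib_right)
  also have "\<dots> = (\<Sum>b\<in>?B. \<Sum>d\<in>?B. if b = d then cnj (u b) * v d else 0)"
  proof (intro sum.cong refl)
    fix b d assume "b \<in> ?B" "d \<in> ?B"
    then have "(\<Sum>c\<in>?B. cnj (U c b) * U c d) = (if b = d then 1 else 0)"
      using assms unfolding is_unitary_def by blast
    then show "(\<Sum>c\<in>?B. cnj (U c b) * U c d) * (cnj (u b) * v d) = (if b = d then cnj (u b) * v d else 0)"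
      by simp
  qed
  also have "\<dots> = cip n m u v" by (simp add: cip_def sum.delta)
  finally show ?thesis .
qed

lemma proj_idem:
  assumes "is_projection n m P" and "a \<in> basis_idx n m"
  shows "apply_op n m P (apply_op n m P v) a = apply_op n m P v a"
proof -
  let ?B = "basis_idx n m"
  have "apply_op n m P (apply_op n m P v) a = (\<Sum>b\<in>?B. \<Sum>c\<in>?B. P a b * P b c * v c)"
    by (simp add: apply_op_def sum_distrib_left mult_ac)
  also have "\<dots> = (\<Sum>c\<in>?B. \<Sum>b\<in>?B. P a b * P b c * v c)" by (rule sum.swap)
  also have "\<dots> = (\<Sum>c\<in>?B. (\<Sum>b\<in>?B. P a b * P b c) * v c)"
    by (simp add: sum_distrib_right)
  also have "\<dots> = (\<Sum>c\<in>?B. P a c * v c)"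
  proof (intro sum.cong refl)
    fix c assume "c \<in> ?B"
    then have "(\<Sum>b\<in>?B. P a b * P b c) = P a c"
      using assms unfolding is_projection_def by blast
    then show "(\<Sum>b\<in>?B. P a b * P b c) * v c = P a c * v c" by simp
  qed
  finally show ?thesis by (simp add: apply_op_def)
qed

lemma unit_norm: "is_unitary n m U \<Longrightarrow> sq_norm n m (apply_op n m U v) = sq_norm n m v"
  using cip_unit[of n m U v v] sq_norm_cip[of n m] by (metis of_real_eq_iff)

lemma pyth:
  assumes "is_projection n m P"
  shows "sq_norm n m (apply_op n m (meas_proj P False) u) = sq_norm n m u - sq_norm n m (apply_op n m P u)"
proof -
  let ?B = "basis_idx n m"
  let ?w = "apply_op n m P u"
  have herm: "\<forall>a\<in>?B. \<forall>b\<in>?B. P a b = cnj (P b a)" using assms unfolding is_projection_def by blast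
  have e: "\<forall>c\<in>?B. apply_op n m (meas_proj P False) u c = u c - ?w c"
  proof
    fix c assume c: "c \<in> ?B"
    have "apply_op n m (meas_proj P False) u c = apply_op n m id_op u c - ?w c"
      by (simp add: meas_proj_def apply_op_def left_diff_distrib sum_subtractf)
    then show "apply_op n m (meas_proj P False) u c = u c - ?w c" using apply_id[OF c] by simp
  qed
  have ww: "cip n m ?w ?w = cip n m u ?w"
  proof -
    have "cip n m ?w ?w = cip n m u (apply_op n m P ?w)" by (rule cip_herm[OF herm])
    also have "\<dots> = cip n m u ?w" using proj_idem[OF assms] by (intro cip_cong) auto
    finally show ?thesis .
  qed
  have wu: "cip n m ?w u = cip n m u ?w" by (rule cip_herm[OF herm])
  have "complex_of_real (sq_norm n m (apply_op n m (meas_proj P False) u))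
       = complex_of_real (sq_norm n m (\<lambda>c. u c - ?w c))"
    by (simp only: sq_norm_cong[OF e])
  also have "\<dots> = cip n m (\<lambda>c. u c - ?w c) (\<lambda>c. u c - ?w c)" by (rule sq_norm_cip)
  also have "\<dots> = (\<Sum>a\<in>?B. cnj (u a) * u a - cnj (u a) * ?w a - cnj (?w a) * u a + cnj (?w a) * ?w a)"
    unfolding cip_def by (intro sum.cong refl) (simp add: algebra_simps)
  also have "\<dots> = cip n m u u - cip n m u ?w - cip n m ?w u + cip n m ?w ?w"
    by (simp only: cip_def sum.distrib sum_subtractf)
  also have "\<dots> = cip n m u u - cip n m ?w ?w" using ww wu by simp
  also have "\<dots> = complex_of_real (sq_norm n m u - sq_norm n m ?w)" by (simp add: sq_norm_cip)
  finally show ?thesis by (metis of_real_eq_iff)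
qed


lemma meas_false_eq:
  assumes "c \<in> basis_idx n m"
  shows "apply_op n m (meas_proj P False) u c = u c - apply_op n m P u c"
proof -
  have "apply_op n m (meas_proj P False) u c = apply_op n m id_op u c - apply_op n m P u c"
    by (simp add: meas_proj_def apply_op_def left_diff_distrib sum_subtractf)
  then show ?thesis using apply_id[OF assms] by simp
qed

definition sg :: "bool list \<Rightarrow> nat \<Rightarrow> real" where
  "sg x i = (if 1 \<le> i \<and> x ! (i - 1) then -1 else 1)"

lemma query_sg: "query_op x v (i,j) = complex_of_real (sg x i) * v (i,j)"
  by (simp add: query_op_def sg_def)

lemma sg_sq: "sg x i * sg x i = 1"
  by (simp add: sg_def)

lemma sg_abs: "\<bar>sg x i\<bar> = 1"
  by (simp add: sg_def)

lemma sg_xor: "1 \<le> i \<Longrightarrow> sg x i * sg y i = xor_sign x y i"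
  by (auto simp: sg_def xor_sign_def)

lemma sum_split0: "(\<Sum>i\<le>(n::nat). g i) = g 0 + (\<Sum>i=1..n. (g i :: real))"
proof -
  have "{..n} = insert 0 {1..n}" by (auto simp: not_less_eq_eq)
  then show ?thesis by simp
qed

lemma sum_sg_xor: "(\<Sum>i\<le>n. sg x i * sg y i * \<beta> i) = \<beta> 0 + (\<Sum>i=1..n. \<beta> i * xor_sign x y i)"
proof -
  have "(\<Sum>i\<le>n. sg x i * sg y i * \<beta> i) = sg x 0 * sg y 0 * \<beta> 0 + (\<Sum>i=1..n. sg x i * sg y i * \<beta> i)"
    by (rule sum_split0)
  also have "(\<Sum>i=1..n. sg x i * sg y i * \<beta> i) = (\<Sum>i=1..n. \<beta> i * xor_sign x y i)"
    by (intro sum.cong refl) (simp add: sg_xor mult.commute)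
  finally show ?thesis by (simp add: sg_def)
qed

lemma cnj_term: "cnj (complex_of_real a * z) * (complex_of_real b * z) = complex_of_real (a * b * (cmod z)^2)"
proof -
  have "complex_of_real (a * b * (cmod z)^2) = of_real a * of_real b * (z * cnj z)"
    by (simp only: of_real_mult complex_norm_square)
  then show ?thesis by (simp add: mult_ac) metis
qed

lemma fwd:
  assumes "exact_1query n D f"
  shows "\<exists>\<beta> :: nat \<Rightarrow> real. (\<forall>i\<le>n. \<beta> i \<ge> 0) \<and> (\<Sum>i\<le>n. \<beta> i) = 1 \<and>
       (\<forall>x\<in>D. \<forall>y\<in>D. \<not> f x \<longrightarrow> f y \<longrightarrow>
          \<beta> 0 + (\<Sum>i=1..n. \<beta> i * xor_sign x y i) = 0)"
proof -
  obtain m \<psi>0 U0 U1 P where nrm: "sq_norm n m \<psi>0 = 1" and u0: "is_unitary n m U0"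
    and u1: "is_unitary n m U1" and pr: "is_projection n m P"
    and ex: "\<forall>x\<in>D. outcome_prob n m P (final_state n m \<psi>0 U0 U1 x) (f x) = 1"
    using assms unfolding exact_1query_def by blast
  let ?B = "basis_idx n m"
  define \<phi> where "\<phi> = apply_op n m U0 \<psi>0"
  define \<beta> where "\<beta> = (\<lambda>i. \<Sum>j<m. (cmod (\<phi> (i,j)))^2)"
  have n\<phi>: "sq_norm n m \<phi> = 1" using unit_norm[OF u0] nrm by (simp add: \<phi>_def)
  have sum\<beta>: "(\<Sum>i\<le>n. \<beta> i) = 1" using n\<phi> by (simp add: \<beta>_def sq_norm_def bsum2)
  have pos: "\<forall>i\<le>n. \<beta> i \<ge> 0" by (simp add: \<beta>_def sum_nonneg)
  have nq: "sq_norm n m (query_op x \<phi>) = 1" for x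
  proof -
    have "cmod (complex_of_real (sg x i) * z) = cmod z" for i z
      by (simp add: norm_mult sg_abs)
    then show ?thesis using n\<phi> by (simp add: sq_norm_def bsum2 query_sg)
  qed
  have herm: "\<forall>a\<in>?B. \<forall>b\<in>?B. P a b = cnj (P b a)" using pr unfolding is_projection_def by blast
  have key: "cip n m (query_op x \<phi>) (query_op y \<phi>) = 0"
    if xy: "x \<in> D" "y \<in> D" "\<not> f x" "f y" for x y
  proof -
    define u where "u = apply_op n m U1 (query_op x \<phi>)"
    define v where "v = apply_op n m U1 (query_op y \<phi>)"
    have nu: "sq_norm n m u = 1" using unit_norm[OF u1] nq by (simp add: u_def)
    have nv: "sq_norm n m v = 1" using unit_norm[OF u1] nq by (simp add: v_def)
    have "outcome_prob n m P u False = 1" using ex xy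
      by (force simp: final_state_def \<phi>_def u_def)
    then have "sq_norm n m (apply_op n m P u) = 0" using pyth[OF pr] nu by (simp add: outcome_prob_def)
    then have "(\<Sum>c\<in>?B. (cmod (apply_op n m P u c))^2) = 0" by (simp add: sq_norm_def)
    then have Pu: "\<forall>c\<in>?B. apply_op n m P u c = 0"
      by (subst (asm) sum_nonneg_eq_0_iff) auto
    have "outcome_prob n m P v True = 1" using ex xy
      by (force simp: final_state_def \<phi>_def v_def)
    then have "sq_norm n m (apply_op n m P v) = 1" by (simp add: outcome_prob_def meas_proj_def)
    then have "sq_norm n m (apply_op n m (meas_proj P False) v) = 0" using pyth[OF pr] nv by simp
    then have "(\<Sum>c\<in>?B. (cmod (apply_op n m (meas_proj P False) v c))^2) = 0" by (simp add: sq_norm_def)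
    then have "\<forall>c\<in>?B. apply_op n m (meas_proj P False) v c = 0"
      by (subst (asm) sum_nonneg_eq_0_iff) auto
    then have Pv: "\<forall>c\<in>?B. v c = apply_op n m P v c" using meas_false_eq by fastforce
    have "cip n m (query_op x \<phi>) (query_op y \<phi>) = cip n m u v"
      by (simp add: u_def v_def cip_unit[OF u1])
    also have "\<dots> = cip n m u (apply_op n m P v)" using Pv by (intro cip_cong) auto
    also have "\<dots> = cip n m (apply_op n m P u) v" by (rule cip_herm[OF herm, symmetric])
    also have "\<dots> = 0" using Pu by (simp add: cip_def)
    finally show ?thesis .
  qed
  have expand: "cip n m (query_op x \<phi>) (query_op y \<phi>) = complex_of_real (\<Sum>i\<le>n. sg x i * sg y i * \<beta> i)" for x y
  proof -
    have "cip n m (query_op x \<phi>) (query_op y \<phi>) = (\<Sum>i\<le>n. \<Sum>j<m.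
       cnj (complex_of_real (sg x i) * \<phi> (i,j)) * (complex_of_real (sg y i) * \<phi> (i,j)))"
      by (simp only: cip_def bsum2 query_sg)
    also have "\<dots> = complex_of_real (\<Sum>i\<le>n. \<Sum>j<m. sg x i * sg y i * (cmod (\<phi> (i,j)))^2)"
      by (simp only: cnj_term of_real_sum)
    also have "(\<Sum>i\<le>n. \<Sum>j<m. sg x i * sg y i * (cmod (\<phi> (i,j)))^2) = (\<Sum>i\<le>n. sg x i * sg y i * \<beta> i)"
      by (simp add: \<beta>_def sum_distrib_left)
    finally show ?thesis .
  qed
  have "\<forall>x\<in>D. \<forall>y\<in>D. \<not> f x \<longrightarrow> f y \<longrightarrow> \<beta> 0 + (\<Sum>i=1..n. \<beta> i * xor_sign x y i) = 0"
  proof (intro ballI impI)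
    fix x y assume "x \<in> D" "y \<in> D" "\<not> f x" "f y"
    then have "complex_of_real (\<Sum>i\<le>n. sg x i * sg y i * \<beta> i) = 0" using key expand by metis
    then show "\<beta> 0 + (\<Sum>i=1..n. \<beta> i * xor_sign x y i) = 0"
      by (simp only: of_real_eq_0_iff sum_sg_xor)
  qed
  then show ?thesis using pos sum\<beta> by blast
qed


lemma unitary_id: "is_unitary n m id_op"
  unfolding is_unitary_def
proof (intro ballI)
  fix a b assume a: "a \<in> basis_idx n m" and b: "b \<in> basis_idx n m"
  have "(\<Sum>c\<in>basis_idx n m. cnj (id_op c a) * id_op c b)
      = (\<Sum>c\<in>basis_idx n m. if c = a then (if a = b then 1 else 0) else 0)"
    by (intro sum.cong refl) (auto simp: id_op_def)
  also have "\<dots> = (if a = b then 1 else 0)" using a by (simp add: sum.delta')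
  finally show "(\<Sum>c\<in>basis_idx n m. cnj (id_op c a) * id_op c b) = (if a = b then 1 else 0)" .
qed

lemma bwd:
  fixes \<beta> :: "nat \<Rightarrow> real"
  assumes len: "D \<subseteq> {x. length x = n}"
    and pos: "\<forall>i\<le>n. \<beta> i \<ge> 0" and s1: "(\<Sum>i\<le>n. \<beta> i) = 1"
    and orth: "\<forall>x\<in>D. \<forall>y\<in>D. \<not> f x \<longrightarrow> f y \<longrightarrow> \<beta> 0 + (\<Sum>i=1..n. \<beta> i * xor_sign x y i) = 0"
  shows "exact_1query n D f"
proof -
  let ?B = "basis_idx n 1"
  define rv :: "bool list \<Rightarrow> idx \<Rightarrow> real" where "rv y = (\<lambda>c. sg y (fst c) * sqrt (\<beta> (fst c)))" for y
  have "finite {xs :: bool list. set xs \<subseteq> UNIV \<and> length xs \<le> n}"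
    by (rule finite_lists_length_le) simp
  then have finD: "finite D" by (rule finite_subset[rotated]) (use len in auto)
  obtain vs where vs: "set vs = rv ` {y\<in>D. f y}"
    using finite_list[of "rv ` {y\<in>D. f y}"] finD by auto
  obtain Q :: "idx \<Rightarrow> idx \<Rightarrow> real" where sym: "\<forall>a\<in>?B. \<forall>b\<in>?B. Q a b = Q b a"
    and idem: "\<forall>a\<in>?B. \<forall>b\<in>?B. (\<Sum>c\<in>?B. Q a c * Q c b) = Q a b"
    and fixv: "\<forall>v\<in>set vs. \<forall>a\<in>?B. rmv ?B Q v a = v a"
    and orthQ: "\<forall>w. (\<forall>v\<in>set vs. rip ?B v w = 0) \<longrightarrow> (\<forall>a\<in>?B. rmv ?B Q w a = 0)"
    using proj_exists[of ?B vs] by auto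
  define P :: qop where "P = (\<lambda>a b. complex_of_real (Q a b))"
  define \<psi>0 :: qstate where "\<psi>0 = (\<lambda>c. complex_of_real (sqrt (\<beta> (fst c))))"
  have rvsq: "(\<Sum>c\<in>?B. (rv x c)^2) = 1" for x
  proof -
    have "(\<Sum>c\<in>?B. (rv x c)^2) = (\<Sum>i\<le>n. (sg x i)^2 * (sqrt (\<beta> i))^2)"
      by (subst bsum1) (simp add: rv_def power_mult_distrib)
    also have "\<dots> = (\<Sum>i\<le>n. \<beta> i)"
      using pos by (intro sum.cong refl) (simp add: power2_eq_square sg_sq)
    finally show ?thesis using s1 by simp
  qed
  have nrm: "sq_norm n 1 (\<lambda>c. complex_of_real (rv x c)) = 1" for x
    using rvsq[of x] by (simp add: sq_norm_def)
  have npsi: "sq_norm n 1 \<psi>0 = 1"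
  proof -
    have "sq_norm n 1 \<psi>0 = (\<Sum>i\<le>n. (sqrt (\<beta> i))^2)" unfolding sq_norm_def by (subst bsum1) (simp add: \<psi>0_def)
    also have "\<dots> = (\<Sum>i\<le>n. \<beta> i)" using pos by (intro sum.cong refl) simp
    finally show ?thesis using s1 by simp
  qed
  have proj: "is_projection n 1 P"
    unfolding is_projection_def
  proof (intro conjI ballI)
    fix a b assume "a \<in> ?B" "b \<in> ?B"
    then show "P a b = cnj (P b a)" using sym by (simp add: P_def)
    have "(\<Sum>c\<in>?B. P a c * P c b) = complex_of_real (\<Sum>c\<in>?B. Q a c * Q c b)"
      by (simp add: P_def)
    also have "\<dots> = P a b" using idem \<open>a \<in> ?B\<close> \<open>b \<in> ?B\<close> by (simp add: P_def)
    finally show "(\<Sum>c\<in>?B. P a c * P c b) = P a b" .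
  qed
  have alg: "outcome_prob n 1 P (final_state n 1 \<psi>0 id_op id_op x) (f x) = 1" if x: "x \<in> D" for x
  proof -
    let ?fs = "final_state n 1 \<psi>0 id_op id_op x"
    have fsv: "\<forall>c\<in>?B. ?fs c = complex_of_real (rv x c)"
    proof
      fix c assume c: "c \<in> ?B"
      obtain i j where ij: "c = (i,j)" by force
      have "?fs c = query_op x (apply_op n 1 id_op \<psi>0) (i,j)"
        unfolding final_state_def using apply_id[OF c] ij by simp
      also have "\<dots> = complex_of_real (sg x i) * \<psi>0 (i,j)"
        using apply_id[OF c] ij by (simp add: query_sg)
      finally show "?fs c = complex_of_real (rv x c)" by (simp add: ij rv_def \<psi>0_def)
    qed
    have Pfs: "\<forall>c\<in>?B. apply_op n 1 P ?fs c = complex_of_real (rmv ?B Q (rv x) c)"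
      using apply_op_cong[OF fsv, of P] by (simp add: apply_op_def rmv_def P_def)
    have nfs: "sq_norm n 1 ?fs = 1" using sq_norm_cong[OF fsv] nrm by simp
    show ?thesis
    proof (cases "f x")
      case True
      then have "rv x \<in> set vs" using vs x by auto
      then have "\<forall>c\<in>?B. apply_op n 1 P ?fs c = complex_of_real (rv x c)" using Pfs fixv by auto
      then have "sq_norm n 1 (apply_op n 1 P ?fs) = 1" using sq_norm_cong nrm by metis
      then show ?thesis using True by (simp add: outcome_prob_def meas_proj_def)
    next
      case False
      have "\<forall>v\<in>set vs. rip ?B v (rv x) = 0"
      proof
        fix v assume "v \<in> set vs"
        then obtain y where y: "y \<in> D" "f y" "v = rv y" using vs by auto
        have "rip ?B v (rv x) = (\<Sum>i\<le>n. sg x i * sg y i * \<beta> i)"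
          unfolding rip_def y using pos by (subst bsum1) (auto simp: rv_def mult_ac intro!: sum.cong)
        also have "\<dots> = 0" using orth x y False by (simp add: sum_sg_xor)
        finally show "rip ?B v (rv x) = 0" .
      qed
      then have "\<forall>c\<in>?B. apply_op n 1 P ?fs c = 0" using Pfs orthQ by auto
      then have "sq_norm n 1 (apply_op n 1 P ?fs) = 0"
        using sq_norm_cong[of n 1 "apply_op n 1 P ?fs" "\<lambda>_. 0"] by (simp add: sq_norm_def)
      then show ?thesis using False pyth[OF proj] nfs by (simp add: outcome_prob_def)
    qed
  qed
  show ?thesis unfolding exact_1query_def
    by (rule exI[of _ 1], rule exI[of _ \<psi>0], rule exI[of _ id_op], rule exI[of _ id_op], rule exI[of _ P])
       (use npsi unitary_id proj alg in auto)
qed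

theorem theorem1:
  fixes n :: nat and D :: "bool list set" and f :: "bool list \<Rightarrow> bool"
  assumes "D \<subseteq> {x. length x = n}"
    and "\<exists>x\<in>D. \<exists>y\<in>D. f x \<noteq> f y"
  shows "exact_1query n D f \<longleftrightarrow>
    (\<exists>\<beta> :: nat \<Rightarrow> real. (\<forall>i\<le>n. \<beta> i \<ge> 0) \<and> (\<Sum>i\<le>n. \<beta> i) = 1 \<and>
       (\<forall>x\<in>D. \<forall>y\<in>D. \<not> f x \<longrightarrow> f y \<longrightarrow>
          \<beta> 0 + (\<Sum>i=1..n. \<beta> i * xor_sign x y i) = 0))"
  using fwd bwd[OF assms(1)] by blast


end
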